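(* Let $n\geq 3$ and $\ell\geq 2$, and consider the generalized $n$-cycle scenario whose measurements each have outcome set $O$ with $|O|=\ell$. A nondisturbing behavior for it is logically contextual if and only if there exist an index $\mu\in\{1,\dots,n\}$, a pair $(a,b)\in O^2$ with $\bar p_\mu(a,b)=1$, and, for each $\nu=1,\dots,n-2$, an enumeration $(\alpha_\nu^1,\dots,\alpha_\nu^\ell)$ of $O$ with pairwise distinct entries and an integer $0\leq m_\nu\leq\ell$, such that all of the following equal $0$: $\bar p_{\mu+1}(b,\alpha_1^i)$ for $1\le i\le m_1$; $\bar p_{\mu+\nu+1}(\alpha_\nu^i,\alpha_{\nu+1}^j)$ for $1\le\nu\le n-3$, $m_\nu< i\le\ell$, $1\le j\le m_{\nu+1}$; $\bar p_{\mu+n-1}(\alpha_{n-2}^i,a)$ for $m_{n-2}<i\le\ell$. (Indices of $\bar p$ are taken modulo $n$.)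
   Context: The generalized $n$-cycle scenario has measurements $M_1,\dots,M_n$, each with finite outcome set $O$, and contexts $\{M_i,M_{i+1}\}$, indices mod $n$. A behavior is a family of probability distributions $p_i$ on $O^2$, $p_i(x,y)$ being the probability that $M_i=x$ and $M_{i+1}=y$; it is nondisturbing if for all $i$ and $x$, $\sum_y p_i(y,x)=\sum_y p_{i+1}(x,y)$. Set $\bar p_i(x,y)=1$ if $p_i(x,y)>0$ and $0$ otherwise. The behavior is logically noncontextual if there exists $\bar p:O^n\to\{0,1\}$ with $\max\{\bar p(t):t_i=x,\ t_{i+1}=y\}=\bar p_i(x,y)$ for all $i,x,y$; otherwise logically contextual. *)

theory Defs
  imports Complex_Main "HOL-Library.FuncSet"
begin

text \<open>Measurements are indexed 0..n-1 (the paper uses 1..n);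
  all context indices are taken modulo n. Outcomes form a finite type 'o with CARD('o) = l.
  p i x y = probability that M_i = x and M_{i+1} = y.\<close>

definition behavior :: "nat \<Rightarrow> (nat \<Rightarrow> 'o::finite \<Rightarrow> 'o \<Rightarrow> real) \<Rightarrow> bool" where
  "behavior n p \<longleftrightarrow> (\<forall>i<n. (\<forall>x y. p i x y \<ge> 0) \<and> (\<Sum>x\<in>UNIV. \<Sum>y\<in>UNIV. p i x y) = 1)"

definition nondisturbing :: "nat \<Rightarrow> (nat \<Rightarrow> 'o::finite \<Rightarrow> 'o \<Rightarrow> real) \<Rightarrow> bool" where
  "nondisturbing n p \<longleftrightarrow>
     (\<forall>i<n. \<forall>x. (\<Sum>y\<in>UNIV. p i y x) = (\<Sum>y\<in>UNIV. p (Suc i mod n) x y))"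

definition pbar :: "nat \<Rightarrow> (nat \<Rightarrow> 'o::finite \<Rightarrow> 'o \<Rightarrow> real) \<Rightarrow> nat \<Rightarrow> 'o \<Rightarrow> 'o \<Rightarrow> nat" where
  "pbar n p i x y = (if p (i mod n) x y > 0 then 1 else 0)"

text \<open>Global assignments t \<in> O^n are extensional functions on {..<n}.\<close>
definition logically_noncontextual :: "nat \<Rightarrow> (nat \<Rightarrow> 'o::finite \<Rightarrow> 'o \<Rightarrow> real) \<Rightarrow> bool" where
  "logically_noncontextual n p \<longleftrightarrow>
     (\<exists>q :: (nat \<Rightarrow> 'o) \<Rightarrow> nat. (\<forall>t. q t \<in> {0, 1}) \<and>
        (\<forall>i<n. \<forall>x y. Max {q t | t. t \<in> PiE {..<n} (\<lambda>_. UNIV) \<and> t i = x \<and> t (Suc i mod n) = y}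
                        = pbar n p i x y))"

definition logically_contextual :: "nat \<Rightarrow> (nat \<Rightarrow> 'o::finite \<Rightarrow> 'o \<Rightarrow> real) \<Rightarrow> bool" where
  "logically_contextual n p \<longleftrightarrow> \<not> logically_noncontextual n p"

end

theory Submission
  imports Defs
begin

definition good :: "nat \<Rightarrow> (nat \<Rightarrow> 'o::finite \<Rightarrow> 'o \<Rightarrow> real) \<Rightarrow> (nat \<Rightarrow> 'o) \<Rightarrow> bool" where
  "good n p t \<longleftrightarrow> (\<forall>k<n. pbar n p k (t k) (t (Suc k mod n)) = 1)"

lemma pbar_01: "pbar n p i x y \<noteq> 1 \<Longrightarrow> pbar n p i x y = 0"
  by (simp add: pbar_def split: if_splits)

lemma pbar_le1: "pbar n p i x y \<le> 1"
  by (simp add: pbar_def)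

lemma pbar_mod: "pbar n p (i mod n) = pbar n p i"
  by (simp add: pbar_def fun_eq_iff)

lemma suc_mod_ne: "n \<ge> 2 \<Longrightarrow> i < n \<Longrightarrow> Suc i mod n \<noteq> i"
  by (metis Suc_lessI gr_implies_not0 lessI less_2_cases_iff mod_less mod_self
      not_less_iff_gr_or_eq numeral_2_eq_2 Suc_le_eq n_not_Suc_n)

lemma fin01:
  fixes q :: "'b \<Rightarrow> nat"
  assumes "\<forall>t. q t \<in> {0, 1}"
  shows "finite {q t | t. P t}"
proof (rule finite_subset[of _ "{0,1}"])
  show "{q t | t. P t} \<subseteq> {0,1}"
  proof
    fix x assume "x \<in> {q t | t. P t}"
    then obtain t where "x = q t" by blast
    thus "x \<in> {0,1}" using assms by simp
  qed
qed simp

lemma lnc_iff: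
  assumes n2: "n \<ge> 2"
  shows "logically_noncontextual n p \<longleftrightarrow>
    (\<forall>i<n. \<forall>x y. pbar n p i x y = 1 \<longrightarrow>
      (\<exists>t \<in> PiE {..<n} (\<lambda>_. UNIV). t i = x \<and> t (Suc i mod n) = y \<and> good n p t))"
proof -
  have ne: "restrict (\<lambda>j. if j = i then x else y) {..<n} \<in> PiE {..<n} (\<lambda>_. UNIV)
      \<and> restrict (\<lambda>j. if j = i then x else y) {..<n} i = x
      \<and> restrict (\<lambda>j. if j = i then x else y) {..<n} (Suc i mod n) = y"
    if "i < n" for i and x y :: 'a
    using that suc_mod_ne[OF n2 that] n2 by auto
  note fin = fin01
  show ?thesis
  proof
    assume "logically_noncontextual n p"
    then obtain q :: "(nat \<Rightarrow> 'a) \<Rightarrow> nat" where q01: "\<forall>t. q t \<in> {0, 1}" and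
      qM: "\<forall>i<n. \<forall>x y. Max {q t | t. t \<in> PiE {..<n} (\<lambda>_. UNIV) \<and> t i = x \<and> t (Suc i mod n) = y}
                        = pbar n p i x y"
      unfolding logically_noncontextual_def by blast
    show "\<forall>i<n. \<forall>x y. pbar n p i x y = 1 \<longrightarrow>
      (\<exists>t \<in> PiE {..<n} (\<lambda>_. UNIV). t i = x \<and> t (Suc i mod n) = y \<and> good n p t)"
    proof (intro allI impI)
      fix i x y assume i: "i < n" and pb: "pbar n p i x y = 1"
      let ?S = "{q t | t. t \<in> PiE {..<n} (\<lambda>_. UNIV) \<and> t i = x \<and> t (Suc i mod n) = y}"
      have "?S \<noteq> {}" using ne[OF i, of x y] by blast
      hence "Max ?S \<in> ?S" using fin[OF q01] by (intro Max_in) auto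
      then obtain t where t: "t \<in> PiE {..<n} (\<lambda>_. UNIV)" "t i = x" "t (Suc i mod n) = y" "q t = 1"
        using qM i pb by auto
      have "good n p t" unfolding good_def
      proof (intro allI impI)
        fix k assume k: "k < n"
        let ?T = "{q t | t. t \<in> PiE {..<n} (\<lambda>_. UNIV) \<and> t k = t k \<and> t (Suc k mod n) = t (Suc k mod n)}"
        have "q t \<le> Max {q t' | t'. t' \<in> PiE {..<n} (\<lambda>_. UNIV) \<and> t' k = t k \<and> t' (Suc k mod n) = t (Suc k mod n)}"
          using t(1) by (intro Max_ge fin[OF q01]) auto
        hence "1 \<le> pbar n p k (t k) (t (Suc k mod n))" using qM k t(4) by simp
        thus "pbar n p k (t k) (t (Suc k mod n)) = 1" using pbar_le1[of n p k] by (meson le_antisym)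
      qed
      thus "\<exists>t \<in> PiE {..<n} (\<lambda>_. UNIV). t i = x \<and> t (Suc i mod n) = y \<and> good n p t"
        using t by blast
    qed
  next
    assume R: "\<forall>i<n. \<forall>x y. pbar n p i x y = 1 \<longrightarrow>
      (\<exists>t \<in> PiE {..<n} (\<lambda>_. UNIV). t i = x \<and> t (Suc i mod n) = y \<and> good n p t)"
    define q :: "(nat \<Rightarrow> 'a) \<Rightarrow> nat" where
      "q t = (if t \<in> PiE {..<n} (\<lambda>_. UNIV) \<and> good n p t then 1 else 0)" for t
    have q01: "\<forall>t. q t \<in> {0, 1}" by (simp add: q_def)
    have "\<forall>i<n. \<forall>x y. Max {q t | t. t \<in> PiE {..<n} (\<lambda>_. UNIV) \<and> t i = x \<and> t (Suc i mod n) = y}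
                        = pbar n p i x y"
    proof (intro allI impI)
      fix i x y assume i: "i < n"
      let ?S = "{q t | t. t \<in> PiE {..<n} (\<lambda>_. UNIV) \<and> t i = x \<and> t (Suc i mod n) = y}"
      show "Max ?S = pbar n p i x y"
      proof (cases "pbar n p i x y = 1")
        case True
        then obtain t where "t \<in> PiE {..<n} (\<lambda>_. UNIV)" "t i = x" "t (Suc i mod n) = y" "good n p t"
          using R i by blast
        hence "1 \<in> ?S" unfolding q_def by force
        moreover have "\<forall>z\<in>?S. z \<le> 1" unfolding q_def by auto
        ultimately have "Max ?S = 1" by (intro Max_eqI fin[OF q01]) auto
        thus ?thesis using True by simp
      next
        case False
        hence p0: "pbar n p i x y = 0" by (rule pbar_01)
        have z: "\<forall>z\<in>?S. z \<le> 0"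
        proof
          fix z assume "z \<in> ?S"
          then obtain t where t: "z = q t" "t i = x" "t (Suc i mod n) = y" by blast
          show "z \<le> 0"
          proof (rule ccontr)
            assume "\<not> z \<le> 0"
            hence "good n p t" using t(1) unfolding q_def by (auto split: if_splits)
            thus False using i t False unfolding good_def by auto
          qed
        qed
        have "?S \<noteq> {}" using ne[OF i, of x y] by blast
        then obtain z where "z \<in> ?S" by blast
        with z have "0 \<in> ?S" by auto
        hence "Max ?S = 0" using z by (intro Max_eqI fin[OF q01]) auto
        thus ?thesis using p0 by simp
      qed
    qed
    thus "logically_noncontextual n p" unfolding logically_noncontextual_def using q01 by blast
  qed
qed

lemma enum_exists:
  fixes A :: "'o::finite set"
  assumes "card (UNIV :: 'o set) = l"
  shows "\<exists>f. bij_betw f {1..l} UNIV \<and> (\<forall>i\<in>{1..l}. f i \<in> A \<longleftrightarrow> card (- A) < i)"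
proof -
  have "finite (- A)" "finite A" by simp_all
  then obtain xs ys where xs: "set xs = - A" "distinct xs" and ys: "set ys = A" "distinct ys"
    using finite_distinct_list by meson
  define zs where "zs = xs @ ys"
  have zd: "distinct zs" unfolding zs_def using xs ys by (simp add: distinct_append)
  have zset: "set zs = UNIV" unfolding zs_def using xs ys by (simp add: Compl_partition2)
  have lx: "length xs = card (- A)" using distinct_card[OF xs(2)] xs(1) by simp
  have lz: "length zs = l" using distinct_card[OF zd] zset assms by simp
  define f where "f i = zs ! (i - 1)" for i
  have inj: "inj_on f {1..l}"
  proof
    fix i j assume "i \<in> {1..l}" "j \<in> {1..l}" "f i = f j"
    hence "i - 1 < length zs" "j - 1 < length zs" "zs ! (i - 1) = zs ! (j - 1)"
      using lz unfolding f_def by auto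
    hence "i - 1 = j - 1" using nth_eq_iff_index_eq[OF zd] by blast
    thus "i = j" using \<open>i \<in> {1..l}\<close> \<open>j \<in> {1..l}\<close> by auto
  qed
  have img: "f ` {1..l} = UNIV"
  proof -
    have "f ` {1..l} = set zs"
    proof
      show "f ` {1..l} \<subseteq> set zs" using lz unfolding f_def by auto
      show "set zs \<subseteq> f ` {1..l}"
      proof
        fix z assume "z \<in> set zs"
        then obtain k where k: "k < length zs" "zs ! k = z" by (metis in_set_conv_nth)
        hence "f (Suc k) = z" "Suc k \<in> {1..l}" using lz unfolding f_def by auto
        thus "z \<in> f ` {1..l}" by (metis imageI)
      qed
    qed
    thus ?thesis using zset by simp
  qed
  have "\<forall>i\<in>{1..l}. f i \<in> A \<longleftrightarrow> card (- A) < i"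
  proof
    fix i assume i: "i \<in> {1..l}"
    show "f i \<in> A \<longleftrightarrow> card (- A) < i"
    proof (cases "i - 1 < length xs")
      case True
      hence "f i = xs ! (i - 1)" unfolding f_def zs_def by (simp add: nth_append)
      hence "f i \<in> - A" using True xs(1) nth_mem[OF True] by simp
      moreover have "\<not> card (- A) < i" using True lx i by simp
      ultimately show ?thesis by simp
    next
      case False
      hence "f i = ys ! (i - 1 - length xs)" unfolding f_def zs_def by (simp add: nth_append)
      moreover have "i - 1 - length xs < length ys" using i lz False unfolding zs_def by auto
      ultimately have "f i \<in> A" using ys(1) nth_mem by metis
      moreover have "card (- A) < i" using False lx i by auto
      ultimately show ?thesis by simp
    qed
  qed
  thus ?thesis using inj img unfolding bij_betw_def by blast
qed

lemma build_t:
  assumes n3: "n \<ge> 3" and mu: "\<mu> < n" and ab: "pbar n p \<mu> a b = 1" and s0: "s 0 = b"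
    and edges: "\<forall>j<n-2. pbar n p (\<mu>+1+j) (s j) (s (Suc j)) = 1"
    and last: "pbar n p (\<mu>+n-1) (s (n-2)) a = 1"
  shows "\<exists>t\<in>PiE {..<n} (\<lambda>_. UNIV). t \<mu> = a \<and> t (Suc \<mu> mod n) = b \<and> good n p t"
proof -
  define s' where "s' = s(n-1 := a)"
  have E: "pbar n p (\<mu>+1+j) (s' j) (s' (Suc j mod n)) = 1" if j: "j < n" for j
  proof -
    consider "j < n - 2" | "j = n - 2" | "j = n - 1" using j by linarith
    thus ?thesis
    proof cases
      case 1
      thus ?thesis using edges n3 unfolding s'_def by auto
    next
      case 2
      have "\<mu>+1+j = \<mu>+n-1" "Suc j mod n = n - 1" using 2 n3 by auto
      thus ?thesis using last 2 n3 unfolding s'_def by auto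
    next
      case 3
      have "pbar n p (\<mu>+1+j) = pbar n p ((\<mu>+1+j) mod n)" by (simp add: pbar_mod)
      also have "(\<mu>+1+j) mod n = \<mu>" using 3 n3 mu by simp
      finally have e: "pbar n p (\<mu>+1+j) = pbar n p \<mu>" by simp
      have "Suc j mod n = 0" using 3 n3 by simp
      thus ?thesis using e ab s0 3 n3 unfolding s'_def by auto
    qed
  qed
  define g where "g k = (k + (n - Suc \<mu>)) mod n" for k
  have fg: "(\<mu>+1+g k) mod n = k" if "k < n" for k
  proof -
    have "(\<mu>+1+g k) mod n = (\<mu>+1+(k + (n - Suc \<mu>))) mod n" unfolding g_def by (rule mod_add_right_eq)
    also have "\<mu>+1+(k + (n - Suc \<mu>)) = k + n" using mu by simp
    finally show ?thesis using that by simp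
  qed
  have gsuc: "g (Suc k mod n) = Suc (g k) mod n" for k
  proof -
    have "g (Suc k mod n) = (Suc k + (n - Suc \<mu>)) mod n" unfolding g_def by (simp add: mod_add_left_eq)
    also have "\<dots> = Suc (k + (n - Suc \<mu>)) mod n" by simp
    also have "\<dots> = Suc (g k) mod n" unfolding g_def by (simp add: mod_Suc_eq)
    finally show ?thesis .
  qed
  define t where "t = restrict (\<lambda>k. s' (g k)) {..<n}"
  have tP: "t \<in> PiE {..<n} (\<lambda>_. UNIV)" unfolding t_def by simp
  have "g \<mu> = n - 1" unfolding g_def using mu by simp
  hence t1: "t \<mu> = a" unfolding t_def s'_def using mu by simp
  have "g (Suc \<mu> mod n) = 0" unfolding gsuc unfolding g_def using mu
    by (simp add: mod_Suc_eq)
  hence t2: "t (Suc \<mu> mod n) = b" unfolding t_def s'_def using mu n3 s0 by simp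
  have "good n p t" unfolding good_def
  proof (intro allI impI)
    fix k assume k: "k < n"
    have gk: "g k < n" unfolding g_def using k by simp
    have "pbar n p k = pbar n p (\<mu>+1+g k)" using fg[OF k] pbar_mod by metis
    moreover have "t k = s' (g k)" unfolding t_def using k by simp
    moreover have "t (Suc k mod n) = s' (Suc (g k) mod n)" unfolding t_def using k gsuc by simp
    ultimately show "pbar n p k (t k) (t (Suc k mod n)) = 1" using E[OF gk] by simp
  qed
  thus ?thesis using tP t1 t2 by blast
qed

theorem theorem4:
  fixes n l :: nat and p :: "nat \<Rightarrow> 'o::finite \<Rightarrow> 'o \<Rightarrow> real"
  assumes "n \<ge> 3" and "l \<ge> 2" and "card (UNIV :: 'o set) = l"
    and "behavior n p" and "nondisturbing n p"
  shows "logically_contextual n p \<longleftrightarrow>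
    (\<exists>\<mu> a b (\<alpha> :: nat \<Rightarrow> nat \<Rightarrow> 'o) (m :: nat \<Rightarrow> nat).
       \<mu> < n \<and> pbar n p \<mu> a b = 1 \<and>
       (\<forall>\<nu>\<in>{1..n-2}. bij_betw (\<alpha> \<nu>) {1..l} UNIV \<and> m \<nu> \<le> l) \<and>
       (\<forall>i\<in>{1..m 1}. pbar n p (\<mu> + 1) b (\<alpha> 1 i) = 0) \<and>
       (\<forall>\<nu>\<in>{1..n-3}. \<forall>i\<in>{m \<nu><..l}. \<forall>j\<in>{1..m (\<nu>+1)}.
           pbar n p (\<mu> + \<nu> + 1) (\<alpha> \<nu> i) (\<alpha> (\<nu>+1) j) = 0) \<and>
       (\<forall>i\<in>{m (n-2)<..l}. pbar n p (\<mu> + n - 1) (\<alpha> (n-2) i) a = 0))"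
proof -
  have n3: "n \<ge> 3" using assms(1) .
  have n2: "n \<ge> 2" using n3 by simp
  note L = lnc_iff[OF n2, of p]
  show ?thesis
  proof
    assume "logically_contextual n p"
    then obtain \<mu> a b where mu: "\<mu> < n" and ab: "pbar n p \<mu> a b = 1" and
      noext: "\<not> (\<exists>t\<in>PiE {..<n} (\<lambda>_. UNIV). t \<mu> = a \<and> t (Suc \<mu> mod n) = b \<and> good n p t)"
      unfolding logically_contextual_def L by blast
    define Reach where "Reach \<nu> = {v. \<exists>s. s 0 = b \<and> s \<nu> = v \<and>
        (\<forall>j<\<nu>. pbar n p (\<mu>+1+j) (s j) (s (Suc j)) = 1)}" for \<nu>
    have step: "y \<in> Reach (Suc \<nu>)" if x: "x \<in> Reach \<nu>" and e: "pbar n p (\<mu>+1+\<nu>) x y = 1" for x y \<nu>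
    proof -
      obtain s where s: "s 0 = b" "s \<nu> = x" "\<forall>j<\<nu>. pbar n p (\<mu>+1+j) (s j) (s (Suc j)) = 1"
        using x unfolding Reach_def by blast
      define s' where "s' = s(Suc \<nu> := y)"
      have "s' 0 = b" "s' (Suc \<nu>) = y" using s unfolding s'_def by auto
      moreover have "\<forall>j<Suc \<nu>. pbar n p (\<mu>+1+j) (s' j) (s' (Suc j)) = 1"
      proof (intro allI impI)
        fix j assume "j < Suc \<nu>"
        hence "j < \<nu> \<or> j = \<nu>" by auto
        thus "pbar n p (\<mu>+1+j) (s' j) (s' (Suc j)) = 1"
          using s e unfolding s'_def by auto
      qed
      ultimately show ?thesis unfolding Reach_def by blast
    qed
    have b0: "b \<in> Reach 0" unfolding Reach_def by auto
    have "\<forall>\<nu>. \<exists>f. bij_betw f {1..l} UNIV \<and> (\<forall>i\<in>{1..l}. f i \<in> Reach \<nu> \<longleftrightarrow> card (- Reach \<nu>) < i)"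
      using enum_exists[OF assms(3)] by blast
    then obtain \<alpha> :: "nat \<Rightarrow> nat \<Rightarrow> 'o" where
      al: "\<forall>\<nu>. bij_betw (\<alpha> \<nu>) {1..l} UNIV \<and> (\<forall>i\<in>{1..l}. \<alpha> \<nu> i \<in> Reach \<nu> \<longleftrightarrow> card (- Reach \<nu>) < i)"
      by metis
    define m where "m \<nu> = card (- Reach \<nu>)" for \<nu>
    have ml: "m \<nu> \<le> l" for \<nu>
      unfolding m_def using card_mono[of "UNIV :: 'o set" "- Reach \<nu>"] assms(3) by simp
    have inR: "\<alpha> \<nu> i \<in> Reach \<nu>" if "i \<in> {m \<nu><..l}" for \<nu> i
      using al that unfolding m_def by auto
    have notR: "\<alpha> \<nu> i \<notin> Reach \<nu>" if "i \<in> {1..m \<nu>}" for \<nu> i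
      using al that ml[of \<nu>] unfolding m_def by auto
    have c1: "\<forall>i\<in>{1..m 1}. pbar n p (\<mu> + 1) b (\<alpha> 1 i) = 0"
    proof
      fix i assume i: "i \<in> {1..m 1}"
      show "pbar n p (\<mu> + 1) b (\<alpha> 1 i) = 0"
      proof (rule pbar_01, rule notI)
        assume "pbar n p (\<mu> + 1) b (\<alpha> 1 i) = 1"
        hence "\<alpha> 1 i \<in> Reach (Suc 0)" using step[OF b0, of "\<alpha> 1 i"] by simp
        thus False using notR[OF i] by simp
      qed
    qed
    have c2: "\<forall>\<nu>\<in>{1..n-3}. \<forall>i\<in>{m \<nu><..l}. \<forall>j\<in>{1..m (\<nu>+1)}.
           pbar n p (\<mu> + \<nu> + 1) (\<alpha> \<nu> i) (\<alpha> (\<nu>+1) j) = 0"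
    proof (intro ballI)
      fix \<nu> i j assume i: "i \<in> {m \<nu><..l}" and j: "j \<in> {1..m (\<nu>+1)}"
      show "pbar n p (\<mu> + \<nu> + 1) (\<alpha> \<nu> i) (\<alpha> (\<nu>+1) j) = 0"
      proof (rule pbar_01, rule notI)
        assume "pbar n p (\<mu> + \<nu> + 1) (\<alpha> \<nu> i) (\<alpha> (\<nu>+1) j) = 1"
        hence "pbar n p (\<mu> + 1 + \<nu>) (\<alpha> \<nu> i) (\<alpha> (\<nu>+1) j) = 1" by (simp add: ac_simps)
        hence "\<alpha> (\<nu>+1) j \<in> Reach (Suc \<nu>)" using step[OF inR[OF i]] by simp
        thus False using notR[OF j] by simp
      qed
    qed
    have c3: "\<forall>i\<in>{m (n-2)<..l}. pbar n p (\<mu> + n - 1) (\<alpha> (n-2) i) a = 0"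
    proof
      fix i assume i: "i \<in> {m (n-2)<..l}"
      show "pbar n p (\<mu> + n - 1) (\<alpha> (n-2) i) a = 0"
      proof (rule pbar_01, rule notI)
        assume last: "pbar n p (\<mu> + n - 1) (\<alpha> (n-2) i) a = 1"
        obtain s where s: "s 0 = b" "s (n-2) = \<alpha> (n-2) i"
          "\<forall>j<n-2. pbar n p (\<mu>+1+j) (s j) (s (Suc j)) = 1"
          using inR[OF i] unfolding Reach_def by blast
        have "\<exists>t\<in>PiE {..<n} (\<lambda>_. UNIV). t \<mu> = a \<and> t (Suc \<mu> mod n) = b \<and> good n p t"
          using build_t[OF n3 mu ab s(1) s(3)] last s(2) by simp
        thus False using noext by blast
      qed
    qed
    show "\<exists>\<mu> a b (\<alpha> :: nat \<Rightarrow> nat \<Rightarrow> 'o) (m :: nat \<Rightarrow> nat).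
       \<mu> < n \<and> pbar n p \<mu> a b = 1 \<and>
       (\<forall>\<nu>\<in>{1..n-2}. bij_betw (\<alpha> \<nu>) {1..l} UNIV \<and> m \<nu> \<le> l) \<and>
       (\<forall>i\<in>{1..m 1}. pbar n p (\<mu> + 1) b (\<alpha> 1 i) = 0) \<and>
       (\<forall>\<nu>\<in>{1..n-3}. \<forall>i\<in>{m \<nu><..l}. \<forall>j\<in>{1..m (\<nu>+1)}.
           pbar n p (\<mu> + \<nu> + 1) (\<alpha> \<nu> i) (\<alpha> (\<nu>+1) j) = 0) \<and>
       (\<forall>i\<in>{m (n-2)<..l}. pbar n p (\<mu> + n - 1) (\<alpha> (n-2) i) a = 0)"
      using mu ab al ml c1 c2 c3 by blast
  next
    assume "\<exists>\<mu> a b (\<alpha> :: nat \<Rightarrow> nat \<Rightarrow> 'o) (m :: nat \<Rightarrow> nat).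
       \<mu> < n \<and> pbar n p \<mu> a b = 1 \<and>
       (\<forall>\<nu>\<in>{1..n-2}. bij_betw (\<alpha> \<nu>) {1..l} UNIV \<and> m \<nu> \<le> l) \<and>
       (\<forall>i\<in>{1..m 1}. pbar n p (\<mu> + 1) b (\<alpha> 1 i) = 0) \<and>
       (\<forall>\<nu>\<in>{1..n-3}. \<forall>i\<in>{m \<nu><..l}. \<forall>j\<in>{1..m (\<nu>+1)}.
           pbar n p (\<mu> + \<nu> + 1) (\<alpha> \<nu> i) (\<alpha> (\<nu>+1) j) = 0) \<and>
       (\<forall>i\<in>{m (n-2)<..l}. pbar n p (\<mu> + n - 1) (\<alpha> (n-2) i) a = 0)"
    then obtain \<mu> a b and \<alpha> :: "nat \<Rightarrow> nat \<Rightarrow> 'o" and m :: "nat \<Rightarrow> nat" where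
      mu: "\<mu> < n" and ab: "pbar n p \<mu> a b = 1" and
      bj: "\<forall>\<nu>\<in>{1..n-2}. bij_betw (\<alpha> \<nu>) {1..l} UNIV \<and> m \<nu> \<le> l" and
      c1: "\<forall>i\<in>{1..m 1}. pbar n p (\<mu> + 1) b (\<alpha> 1 i) = 0" and
      c2: "\<forall>\<nu>\<in>{1..n-3}. \<forall>i\<in>{m \<nu><..l}. \<forall>j\<in>{1..m (\<nu>+1)}.
           pbar n p (\<mu> + \<nu> + 1) (\<alpha> \<nu> i) (\<alpha> (\<nu>+1) j) = 0" and
      c3: "\<forall>i\<in>{m (n-2)<..l}. pbar n p (\<mu> + n - 1) (\<alpha> (n-2) i) a = 0"
      by blast
    show "logically_contextual n p"
      unfolding logically_contextual_def L
    proof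
      assume "\<forall>i<n. \<forall>x y. pbar n p i x y = 1 \<longrightarrow>
        (\<exists>t \<in> PiE {..<n} (\<lambda>_. UNIV). t i = x \<and> t (Suc i mod n) = y \<and> good n p t)"
      then obtain t where t: "t \<mu> = a" "t (Suc \<mu> mod n) = b" "good n p t"
        using mu ab by blast
      define s where "s j = t ((\<mu>+1+j) mod n)" for j
      have edge: "pbar n p (\<mu>+1+j) (s j) (s (Suc j)) = 1" for j
      proof -
        define k where "k = (\<mu>+1+j) mod n"
        have k: "k < n" unfolding k_def using n3 by simp
        have "pbar n p k (t k) (t (Suc k mod n)) = 1" using t(3) k unfolding good_def by blast
        moreover have "Suc k mod n = (\<mu>+1+Suc j) mod n" unfolding k_def by (simp add: mod_Suc_eq)
        moreover have "pbar n p k = pbar n p (\<mu>+1+j)" unfolding k_def by (rule pbar_mod)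
        ultimately show ?thesis unfolding s_def k_def by simp
      qed
      have s0: "s 0 = b" using t(2) unfolding s_def by simp
      have sl: "s (n-1) = a"
      proof -
        have "\<mu>+1+(n-1) = \<mu> + n" using n3 by simp
        hence "(\<mu>+1+(n-1)) mod n = \<mu>" using mu by simp
        thus ?thesis using t(1) unfolding s_def by simp
      qed
      have inv: "\<nu> \<in> {1..n-2} \<Longrightarrow> i \<in> {1..l} \<Longrightarrow> \<alpha> \<nu> i = s \<nu> \<Longrightarrow> m \<nu> < i" for \<nu> i
      proof (induction \<nu> arbitrary: i)
        case 0
        then show ?case by simp
      next
        case (Suc \<nu>)
        show ?case
        proof (cases "\<nu> = 0")
          case True
          show ?thesis
          proof (rule ccontr)
            assume "\<not> m (Suc \<nu>) < i"
            hence "i \<in> {1..m 1}" using Suc.prems True by auto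
            hence "pbar n p (\<mu> + 1) b (\<alpha> 1 i) = 0" using c1 by blast
            moreover have "pbar n p (\<mu> + 1) b (\<alpha> 1 i) = 1"
              using edge[of 0] s0 Suc.prems True by simp
            ultimately show False by simp
          qed
        next
          case False
          have nu: "\<nu> \<in> {1..n-2}" "\<nu> \<in> {1..n-3}" using False Suc.prems by auto
          have "bij_betw (\<alpha> \<nu>) {1..l} UNIV" using bj nu by blast
          then obtain i' where i': "i' \<in> {1..l}" "\<alpha> \<nu> i' = s \<nu>"
            unfolding bij_betw_def by (metis UNIV_I imageE)
          have mi': "m \<nu> < i'" using Suc.IH[OF nu(1) i'] .
          show ?thesis
          proof (rule ccontr)
            assume "\<not> m (Suc \<nu>) < i"
            hence "i \<in> {1..m (\<nu>+1)}" using Suc.prems by auto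
            moreover have "i' \<in> {m \<nu><..l}" using i' mi' by auto
            ultimately have "pbar n p (\<mu> + \<nu> + 1) (\<alpha> \<nu> i') (\<alpha> (\<nu>+1) i) = 0" using c2 nu by blast
            moreover have "pbar n p (\<mu> + \<nu> + 1) (\<alpha> \<nu> i') (\<alpha> (\<nu>+1) i) = 1"
              using edge[of \<nu>] i'(2) Suc.prems(3) by (simp add: ac_simps)
            ultimately show False by simp
          qed
        qed
      qed
      have nn: "n - 2 \<in> {1..n-2}" using n3 by auto
      have "bij_betw (\<alpha> (n-2)) {1..l} UNIV" using bj nn by blast
      then obtain i where i: "i \<in> {1..l}" "\<alpha> (n-2) i = s (n-2)"
        unfolding bij_betw_def by (metis UNIV_I imageE)
      have "m (n-2) < i" using inv[OF nn i] .
      hence "i \<in> {m (n-2)<..l}" using i by auto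
      hence "pbar n p (\<mu> + n - 1) (\<alpha> (n-2) i) a = 0" using c3 by blast
      moreover have "pbar n p (\<mu> + n - 1) (\<alpha> (n-2) i) a = 1"
      proof -
        have "Suc (n-2) = n - 1" "\<mu>+1+(n-2) = \<mu> + n - 1" using n3 by auto
        thus ?thesis using edge[of "n-2"] i(2) sl by simp
      qed
      ultimately show False by simp
    qed
  qed
qed

end
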